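(* Let $\kappa\ge1$ and assume $\pi$ satisfies $\mathrm{MA}(\kappa)$ with constant $c_0>0$. Let $\mathcal{F}=\{f_1,\dots,f_M\}$ be a set of prediction rules $\mathcal{X}\to\{-1,1\}$. Then the ERM aggregate $\tilde f_n^{(\mathrm{ERM})}$ over $\mathcal{F}$ satisfies, for every integer $n\ge1$, $$\mathbb{E}[R(\tilde f_n^{(\mathrm{ERM})})-R^*]\le\min_{f\in\mathcal{F}}(R(f)-R^* )+C\left(\sqrt{\frac{\min_{f\in\mathcal{F}}(R(f)-R^* )^{1/\kappa}\log M}{n}}+\left(\frac{\log M}{n}\right)^{\kappa/(2\kappa-1)}\right),$$ where $C=32(6\vee537c_0\vee16(2c_0+1/3))$.
   Context: $(X,Y)$ is a random pair on $\mathcal{X}\times\{-1,1\}$ with distribution $\pi$; $D_n=((X_i,Y_i))_{i=1}^n$ are i.i.d. copies. $\eta(x)=\mathbb{P}(Y=1\mid X=x)$, $f^*=\mathrm{sign}(2\eta-1)$, $R(f)=\mathbb{P}(Y\ne f(X))$ (conditionally on $D_n$ for data-dependent $f$), $R^*=R(f^* )$. $\mathrm{MA}(\kappa)$ with constant $c_0$: $\mathbb{E}|f(X)-f^*(X)|\le c_0(R(f)-R^* )^{1/\kappa}$ for all measurable $f:\mathcal{X}\to\{-1,1\}$. The ERM aggregate is one element of $\mathcal{F}$ minimizing the empirical hinge risk $A_n(f)=\frac1n\sum_{i=1}^n\max(1-Y_if(X_i),0)$ over $\mathcal{F}$ (for $\{-1,1\}$-valued $f$, $A_n(f)=\frac2n\sum_{i=1}^n\mathbf{1}_{Y_i\ne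 f(X_i)}$, so this is empirical misclassification minimization). $a\vee b=\max(a,b)$. *)

theory Defs
  imports "HOL-Probability.Probability"
begin

text \<open>Setting: SX is the measurable space of inputs, P (= pi) is the joint law of (X,Y)
  on SX \<times> real (labels in {-1,1} almost surely).\<close>

text \<open>sign with the convention sign 0 = 1, so that f* takes values in {-1,1}.\<close>
definition sign1 :: "real \<Rightarrow> real" where
  "sign1 t = (if t \<ge> 0 then 1 else -1)"

text \<open>eta is a version of the regression function P(Y=1 | X=x).\<close>
definition is_regression_fun :: "('a \<times> real) measure \<Rightarrow> 'a measure \<Rightarrow> ('a \<Rightarrow> real) \<Rightarrow> bool" where
  "is_regression_fun P SX eta \<longleftrightarrow> eta \<in> borel_measurable SX \<and>
     (\<forall>A \<in> sets SX. integrable (distr P SX fst) (\<lambda>x. indicator A x * eta x) \<and>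
        measure P (A \<times> {1}) = (LINT x:A | distr P SX fst. eta x))"

definition bayes_rule :: "('a \<Rightarrow> real) \<Rightarrow> 'a \<Rightarrow> real" where
  "bayes_rule eta x = sign1 (2 * eta x - 1)"

definition risk :: "('a \<times> real) measure \<Rightarrow> ('a \<Rightarrow> real) \<Rightarrow> real" where
  "risk P f = measure P {z \<in> space P. snd z \<noteq> f (fst z)}"

definition bayes_risk :: "('a \<times> real) measure \<Rightarrow> ('a \<Rightarrow> real) \<Rightarrow> real" where
  "bayes_risk P eta = risk P (bayes_rule eta)"

definition classifier :: "'a measure \<Rightarrow> ('a \<Rightarrow> real) \<Rightarrow> bool" where
  "classifier SX f \<longleftrightarrow> f \<in> borel_measurable SX \<and> (\<forall>x. f x \<in> {-1, 1})"

definition margin_assumption ::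
  "('a \<times> real) measure \<Rightarrow> 'a measure \<Rightarrow> ('a \<Rightarrow> real) \<Rightarrow> real \<Rightarrow> real \<Rightarrow> bool" where
  "margin_assumption P SX eta kappa c0 \<longleftrightarrow>
     (\<forall>f. classifier SX f \<longrightarrow>
        (\<integral>z. \<bar>f (fst z) - bayes_rule eta (fst z)\<bar> \<partial>P)
          \<le> c0 * (risk P f - bayes_risk P eta) powr (1 / kappa))"

definition emp_hinge :: "nat \<Rightarrow> (nat \<Rightarrow> 'a \<times> real) \<Rightarrow> ('a \<Rightarrow> real) \<Rightarrow> real" where
  "emp_hinge n D f = (1 / real n) * (\<Sum>i<n. max (1 - snd (D i) * f (fst (D i))) 0)"

definition is_ERM :: "nat \<Rightarrow> ('a \<times> real) measure \<Rightarrow> ('a \<Rightarrow> real) set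
    \<Rightarrow> ((nat \<Rightarrow> 'a \<times> real) \<Rightarrow> ('a \<Rightarrow> real)) \<Rightarrow> bool" where
  "is_ERM n P F erm \<longleftrightarrow>
     (\<forall>D \<in> space (PiM {..<n} (\<lambda>_. P)). erm D \<in> F \<and> (\<forall>f \<in> F. emp_hinge n D (erm D) \<le> emp_hinge n D f))"

end

theory Submission
  imports Defs
begin

lemma mgf_real_bound:
  fixes pp pm :: real
  assumes "0 \<le> pm" "pm \<le> pp"
  shows "\<exists>l\<ge>0. 1 - (pp + pm) + exp (- l) * pp + exp l * pm \<le> exp (- ((pp - pm)^2 / (2 * (pp + pm))))"
proof (cases "pm = 0")
  case True
  show ?thesis
  proof (intro exI[of _ "ln 2"] conjI)
    show "0 \<le> ln (2::real)" by simp
    have e: "exp (- ln 2) = (1/2::real)" by (simp add: exp_minus)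
    have "1 - (pp + pm) + exp (- ln 2) * pp + exp (ln 2) * pm = 1 + (- pp/2)" using True by (simp add: e)
    also have "\<dots> \<le> exp (- pp / 2)" using exp_ge_add_one_self[of "-pp/2"] by simp
    also have "- pp / 2 = - ((pp - pm)^2 / (2 * (pp + pm)))"
      using True by (cases "pp = 0") (auto simp: power2_eq_square)
    finally show "1 - (pp + pm) + exp (- ln 2) * pp + exp (ln 2) * pm \<le> exp (- ((pp - pm)^2 / (2 * (pp + pm))))" .
  qed
next
  case False
  hence pm: "pm > 0" using assms by simp
  hence pp: "pp > 0" using assms by simp
  define a where "a = sqrt pp"
  define b where "b = sqrt pm"
  have a: "a > 0" "a^2 = pp" using pp by (auto simp: a_def)
  have b: "b > 0" "b^2 = pm" using pm by (auto simp: b_def)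
  have ab: "b \<le> a" using assms by (simp add: a_def b_def)
  define l where "l = ln (a / b)"
  have el: "exp l = a / b" using a b by (simp add: l_def)
  have eml: "exp (- l) = b / a" using a b by (simp add: l_def exp_minus)
  show ?thesis
  proof (intro exI[of _ l] conjI)
    show "0 \<le> l" using a b ab by (simp add: l_def)
    have "1 - (pp + pm) + exp (- l) * pp + exp l * pm = 1 + (- ((a - b)^2))"
    proof -
      have "exp (- l) * pp = (b / a) * (a * a)" using a eml by (simp add: power2_eq_square)
      also have "\<dots> = a * b" using a by simp
      finally have 1: "exp (- l) * pp = a * b" .
      have "exp l * pm = (a / b) * (b * b)" using b el by (simp add: power2_eq_square)
      also have "\<dots> = a * b" using b by simp
      finally have 2: "exp l * pm = a * b" .
      note 1 2
      show ?thesis using 1 2 a b by (simp add: power2_eq_square algebra_simps)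
    qed
    also have "\<dots> \<le> exp (- ((a - b)^2))" by (rule exp_ge_add_one_self)
    also have "\<dots> \<le> exp (- ((pp - pm)^2 / (2 * (pp + pm))))"
    proof -
      have "(pp - pm)^2 = (a - b)^2 * (a + b)^2" using a b by (simp add: power2_eq_square algebra_simps)
      also have "\<dots> \<le> (a - b)^2 * (2 * (pp + pm))"
      proof (rule mult_left_mono)
        have "(a + b)^2 = 2 * (a^2 + b^2) - (a - b)^2" by (simp add: power2_eq_square algebra_simps)
        moreover have "0 \<le> (a - b)^2" by simp
        ultimately show "(a + b)^2 \<le> 2 * (pp + pm)" unfolding a(2)[symmetric] b(2)[symmetric] by linarith
      qed simp
      finally have "(pp - pm)^2 / (2 * (pp + pm)) \<le> (a - b)^2"
        using pp pm by (simp add: divide_le_eq)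
      thus ?thesis by simp
    qed
    finally show "1 - (pp + pm) + exp (- l) * pp + exp l * pm \<le> exp (- ((pp - pm)^2 / (2 * (pp + pm))))" .
  qed
qed

context
  fixes P :: "('a \<times> real) measure" and SX :: "'a measure"
  assumes PS: "prob_space P"
    and sets_P: "sets P = sets (SX \<Otimes>\<^sub>M borel)"
    and lab: "AE z in P. snd z \<in> {-1, 1}"
begin

lemma space_P: "space P = space SX \<times> UNIV"
  using sets_eq_imp_space_eq[OF sets_P] by (simp add: space_pair_measure)

lemma meas_fst[measurable]: "fst \<in> measurable P SX"
  using measurable_fst[of SX borel] by (simp add: measurable_cong_sets[OF sets_P refl])

lemma meas_snd[measurable]: "snd \<in> borel_measurable P"
  using measurable_snd[of SX borel] by (simp add: measurable_cong_sets[OF sets_P refl])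

lemma meas_cl: "classifier SX f \<Longrightarrow> (\<lambda>z. f (fst z)) \<in> borel_measurable P"
  unfolding classifier_def by (auto intro: measurable_compose[OF meas_fst])

lemma chernoff_prod:
  fixes Z :: "'a \<times> real \<Rightarrow> real"
  assumes Zm: "Z \<in> borel_measurable P" and A: "A \<in> sets (PiM {..<n} (\<lambda>_. P))"
    and Aneg: "\<forall>D\<in>A. (\<Sum>i<n. Z (D i)) \<le> 0" and l: "l \<ge> 0"
  shows "emeasure (PiM {..<n} (\<lambda>_. P)) A \<le> (\<integral>\<^sup>+z. ennreal (exp (- l * Z z)) \<partial>P) ^ n"
proof -
  have pps: "product_prob_space (\<lambda>_. P)"
    unfolding product_prob_space_def product_prob_space_axioms_def product_sigma_finite_def
    using PS prob_space_imp_sigma_finite by blast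
  interpret product_prob_space "\<lambda>_. P" "{..<n}" by (rule pps)
  have "emeasure (PiM {..<n} (\<lambda>_. P)) A = (\<integral>\<^sup>+D. indicator A D \<partial>PiM {..<n} (\<lambda>_. P))"
    using A by simp
  also have "\<dots> \<le> (\<integral>\<^sup>+D. (\<Prod>i\<in>{..<n}. ennreal (exp (- l * Z (D i)))) \<partial>PiM {..<n} (\<lambda>_. P))"
  proof (rule nn_integral_mono)
    fix D
    have e: "(\<Prod>i\<in>{..<n}. ennreal (exp (- l * Z (D i)))) = ennreal (exp (- l * (\<Sum>i<n. Z (D i))))"
      by (simp add: prod_ennreal exp_sum sum_distrib_left)
    show "indicator A D \<le> (\<Prod>i\<in>{..<n}. ennreal (exp (- l * Z (D i))))"
    proof (cases "D \<in> A")
      case True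
      hence "- l * (\<Sum>i<n. Z (D i)) \<ge> 0" using Aneg l True by (simp add: mult_nonneg_nonpos)
      hence "exp (- l * (\<Sum>i<n. Z (D i))) \<ge> 1" by simp
      thus ?thesis using True e by simp
    qed simp
  qed
  also have "\<dots> = (\<Prod>i\<in>{..<n}. \<integral>\<^sup>+z. ennreal (exp (- l * Z z)) \<partial>P)"
    by (rule product_nn_integral_prod) (use Zm in auto)
  also have "\<dots> = (\<integral>\<^sup>+z. ennreal (exp (- l * Z z)) \<partial>P) ^ n" by simp
  finally show ?thesis .
qed

end

context
  fixes P :: "('a \<times> real) measure" and SX :: "'a measure"
  assumes PS: "prob_space P"
    and sets_P: "sets P = sets (SX \<Otimes>\<^sub>M borel)"
    and lab: "AE z in P. snd z \<in> {-1, 1}"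
begin

lemma mgf_eq:
  assumes f: "classifier SX f" and g: "classifier SX g"
  defines "Z \<equiv> \<lambda>z. max (1 - snd z * f (fst z)) 0 - max (1 - snd z * g (fst z)) 0"
    and "Sp \<equiv> {z\<in>space P. snd z \<noteq> f (fst z) \<and> snd z = g (fst z)}"
    and "Sm \<equiv> {z\<in>space P. snd z = f (fst z) \<and> snd z \<noteq> g (fst z)}"
  shows "(\<integral>\<^sup>+z. ennreal (exp (- (l/2) * Z z)) \<partial>P)
     = ennreal (1 - (measure P Sp + measure P Sm) + exp (-l) * measure P Sp + exp l * measure P Sm)"
proof -
  interpret prob_space P by (rule PS)
  note [measurable] = meas_fst[OF PS sets_P lab] meas_snd[OF PS sets_P lab]
  have [measurable]: "f \<in> borel_measurable SX" "g \<in> borel_measurable SX"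
    using f g by (auto simp: classifier_def)
  have fv: "f x \<in> {-1, 1}" "g x \<in> {-1, 1}" for x using f g by (auto simp: classifier_def)
  have Sp[measurable]: "Sp \<in> sets P" unfolding Sp_def by measurable
  have Sm[measurable]: "Sm \<in> sets P" unfolding Sm_def by measurable
  define S0 where "S0 = space P - (Sp \<union> Sm)"
  have S0[measurable]: "S0 \<in> sets P" unfolding S0_def by auto
  have disj: "Sp \<inter> Sm = {}" by (auto simp: Sp_def Sm_def)
  have "AE z in P. ennreal (exp (- (l/2) * Z z)) =
      indicator S0 z + ennreal (exp (-l)) * indicator Sp z + ennreal (exp l) * indicator Sm z"
    using AE_space lab
  proof eventually_elim
    case (elim z)
    have f1: "f (fst z) \<in> {-1, 1}" and g1: "g (fst z) \<in> {-1, 1}" using fv by auto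
    show ?case
      using elim f1 g1 by (auto simp: Z_def Sp_def Sm_def S0_def indicator_def)
  qed
  hence "(\<integral>\<^sup>+z. ennreal (exp (- (l/2) * Z z)) \<partial>P) =
      (\<integral>\<^sup>+z. indicator S0 z + ennreal (exp (-l)) * indicator Sp z + ennreal (exp l) * indicator Sm z \<partial>P)"
    by (rule nn_integral_cong_AE)
  also have "\<dots> = (\<integral>\<^sup>+z. indicator S0 z \<partial>P) + (\<integral>\<^sup>+z. ennreal (exp (-l)) * indicator Sp z \<partial>P)
      + (\<integral>\<^sup>+z. ennreal (exp l) * indicator Sm z \<partial>P)"
    by (simp add: nn_integral_add)
  also have "\<dots> = ennreal (measure P S0) + ennreal (exp (-l)) * ennreal (measure P Sp)
      + ennreal (exp l) * ennreal (measure P Sm)"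
    by (simp add: nn_integral_cmult_indicator emeasure_eq_measure)
  also have "measure P S0 = 1 - (measure P Sp + measure P Sm)"
  proof -
    have "measure P S0 = 1 - measure P (Sp \<union> Sm)" unfolding S0_def by (rule prob_compl) simp
    also have "measure P (Sp \<union> Sm) = measure P Sp + measure P Sm"
      using disj by (intro finite_measure_Union) auto
    finally show ?thesis .
  qed
  also have "ennreal (1 - (measure P Sp + measure P Sm)) + ennreal (exp (-l)) * ennreal (measure P Sp)
      + ennreal (exp l) * ennreal (measure P Sm)
    = ennreal (1 - (measure P Sp + measure P Sm) + exp (-l) * measure P Sp + exp l * measure P Sm)"
  proof -
    have "0 \<le> 1 - (measure P Sp + measure P Sm)"
      using \<open>measure P S0 = 1 - (measure P Sp + measure P Sm)\<close> by (metis measure_nonneg)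
    thus ?thesis by (simp add: ennreal_plus ennreal_mult)
  qed
  finally show ?thesis .
qed

lemma risk_diff:
  assumes f: "classifier SX f" and g: "classifier SX g"
  defines "Sp \<equiv> {z\<in>space P. snd z \<noteq> f (fst z) \<and> snd z = g (fst z)}"
    and "Sm \<equiv> {z\<in>space P. snd z = f (fst z) \<and> snd z \<noteq> g (fst z)}"
  shows "risk P f - risk P g = measure P Sp - measure P Sm"
    and "measure P Sp + measure P Sm \<le> measure P {z\<in>space P. f (fst z) \<noteq> g (fst z)}"
    and "measure P Sm \<le> measure P Sp \<Longrightarrow> True"
proof -
  interpret prob_space P by (rule PS)
  note [measurable] = meas_fst[OF PS sets_P lab] meas_snd[OF PS sets_P lab]
  have [measurable]: "f \<in> borel_measurable SX" "g \<in> borel_measurable SX"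
    using f g by (auto simp: classifier_def)
  have Sp[measurable]: "Sp \<in> sets P" unfolding Sp_def by measurable
  have Sm[measurable]: "Sm \<in> sets P" unfolding Sm_def by measurable
  define T where "T = {z\<in>space P. snd z \<noteq> f (fst z) \<and> snd z \<noteq> g (fst z)}"
  have T[measurable]: "T \<in> sets P" unfolding T_def by measurable
  have "{z\<in>space P. snd z \<noteq> f (fst z)} = Sp \<union> T" by (auto simp: Sp_def T_def)
  hence rf: "risk P f = measure P Sp + measure P T"
    unfolding risk_def by (simp add: finite_measure_Union Sp_def T_def disjoint_iff)
  have "{z\<in>space P. snd z \<noteq> g (fst z)} = Sm \<union> T" by (auto simp: Sm_def T_def)
  hence rg: "risk P g = measure P Sm + measure P T"
    unfolding risk_def by (simp add: finite_measure_Union Sm_def T_def disjoint_iff)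
  show "risk P f - risk P g = measure P Sp - measure P Sm" using rf rg by simp
  have "measure P Sp + measure P Sm = measure P (Sp \<union> Sm)"
    by (rule finite_measure_Union[symmetric]) (auto simp: Sp_def Sm_def)
  also have "\<dots> \<le> measure P {z\<in>space P. f (fst z) \<noteq> g (fst z)}"
    by (rule finite_measure_mono) (auto simp: Sp_def Sm_def)
  finally show "measure P Sp + measure P Sm \<le> measure P {z\<in>space P. f (fst z) \<noteq> g (fst z)}" .
qed simp

lemma dis_tri:
  assumes f: "classifier SX f" and g: "classifier SX g" and h: "classifier SX h"
  shows "measure P {z\<in>space P. f (fst z) \<noteq> g (fst z)} \<le>
    measure P {z\<in>space P. f (fst z) \<noteq> h (fst z)} + measure P {z\<in>space P. g (fst z) \<noteq> h (fst z)}"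
proof -
  interpret prob_space P by (rule PS)
  note [measurable] = meas_fst[OF PS sets_P lab] meas_snd[OF PS sets_P lab]
  have [measurable]: "f \<in> borel_measurable SX" "g \<in> borel_measurable SX" "h \<in> borel_measurable SX"
    using f g h by (auto simp: classifier_def)
  have "measure P {z\<in>space P. f (fst z) \<noteq> g (fst z)} \<le>
      measure P ({z\<in>space P. f (fst z) \<noteq> h (fst z)} \<union> {z\<in>space P. g (fst z) \<noteq> h (fst z)})"
    by (rule finite_measure_mono) auto
  also have "\<dots> \<le> measure P {z\<in>space P. f (fst z) \<noteq> h (fst z)} + measure P {z\<in>space P. g (fst z) \<noteq> h (fst z)}"
    by (rule measure_Un_le) auto
  finally show ?thesis .
qed

lemma dis_int:
  assumes f: "classifier SX f" and h: "classifier SX h"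
  shows "measure P {z\<in>space P. f (fst z) \<noteq> h (fst z)} = (\<integral>z. \<bar>f (fst z) - h (fst z)\<bar> \<partial>P) / 2"
proof -
  interpret prob_space P by (rule PS)
  note [measurable] = meas_fst[OF PS sets_P lab] meas_snd[OF PS sets_P lab]
  have [measurable]: "f \<in> borel_measurable SX" "h \<in> borel_measurable SX"
    using f h by (auto simp: classifier_def)
  define S where "S = {z\<in>space P. f (fst z) \<noteq> h (fst z)}"
  have S[measurable]: "S \<in> sets P" unfolding S_def by measurable
  have fv: "f x \<in> {-1, 1}" "h x \<in> {-1, 1}" for x using f h by (auto simp: classifier_def)
  have "(\<integral>z. \<bar>f (fst z) - h (fst z)\<bar> \<partial>P) = (\<integral>z. 2 * indicator S z \<partial>P)"
  proof (rule Bochner_Integration.integral_cong[OF refl])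
    fix z assume "z \<in> space P"
    thus "\<bar>f (fst z) - h (fst z)\<bar> = 2 * indicator S z"
      using fv[of "fst z"] by (auto simp: S_def indicator_def)
  qed
  also have "\<dots> = 2 * measure P S" by simp
  finally show ?thesis by (simp add: S_def)
qed

end

context
  fixes P :: "('a \<times> real) measure" and SX :: "'a measure"
  assumes PS: "prob_space P"
    and sets_P: "sets P = sets (SX \<Otimes>\<^sub>M borel)"
    and lab: "AE z in P. snd z \<in> {-1, 1}"
begin

lemma risk_formula:
  assumes reg: "is_regression_fun P SX eta" and f: "classifier SX f"
  shows "integrable (distr P SX fst) (\<lambda>x. if f x = 1 then 1 - eta x else eta x)
    \<and> risk P f = (\<integral>x. (if f x = 1 then 1 - eta x else eta x) \<partial>distr P SX fst)"
proof -
  interpret prob_space P by (rule PS)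
  note [measurable] = meas_fst[OF PS sets_P lab] meas_snd[OF PS sets_P lab]
  have [measurable]: "f \<in> borel_measurable SX" using f by (auto simp: classifier_def)
  have fv: "f x \<in> {-1, 1}" for x using f by (auto simp: classifier_def)
  have sp: "space P = space SX \<times> UNIV" by (rule space_P[OF PS sets_P lab])
  define PX where "PX = distr P SX fst"
  interpret PX: prob_space PX unfolding PX_def by (rule prob_space_distr) simp
  have spx: "space PX = space SX" by (simp add: PX_def)
  have eta[measurable]: "eta \<in> borel_measurable SX" using reg by (simp add: is_regression_fun_def)
  have regI: "integrable PX (\<lambda>x. indicator C x * eta x)"
    and regM: "measure P (C \<times> {1}) = (\<integral>x. indicator C x * eta x \<partial>PX)" if "C \<in> sets SX" for C
    using reg that by (auto simp: is_regression_fun_def PX_def set_lebesgue_integral_def)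
  define A where "A = {x\<in>space SX. f x = 1}"
  define B where "B = {x\<in>space SX. f x = -1}"
  have A[measurable]: "A \<in> sets SX" unfolding A_def by measurable
  have B[measurable]: "B \<in> sets SX" unfolding B_def by measurable
  have setsT: "C \<times> {y} \<in> sets P" if "C \<in> sets SX" for C y
    unfolding sets_P using that by (intro pair_measureI) auto
  have setsU: "C \<times> UNIV \<in> sets P" if "C \<in> sets SX" for C
    unfolding sets_P using that by (intro pair_measureI) auto
  have AB: "A \<inter> B = {}" by (auto simp: A_def B_def)
  have s1: "risk P f = measure P (A \<times> {-1}) + measure P (B \<times> {1})"
  proof -
    have "risk P f = measure P ((A \<times> {-1}) \<union> (B \<times> {1}))"
      unfolding risk_def
    proof (rule measure_eq_AE)
      show "AE z in P. (z \<in> {z \<in> space P. snd z \<noteq> f (fst z)}) = (z \<in> A \<times> {- 1} \<union> B \<times> {1})"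
        using AE_space lab
      proof eventually_elim
        case (elim z)
        obtain x y where z: "z = (x, y)" by (cases z)
        have x: "x \<in> space SX" using elim(1) sp z by auto
        have y: "y = -1 \<or> y = 1" using elim(2) z by auto
        have fx: "f x = -1 \<or> f x = 1" using fv[of x] by auto
        have "(z \<in> {z \<in> space P. snd z \<noteq> f (fst z)}) = (y \<noteq> f x)" using elim(1) z by simp
        also have "\<dots> = (z \<in> A \<times> {- 1} \<union> B \<times> {1})"
          using y fx by (elim disjE) (simp_all add: z A_def B_def x)
        finally show ?case .
      qed
    next
      show "{z \<in> space P. snd z \<noteq> f (fst z)} \<in> sets P" by measurable
    next
      show "A \<times> {- 1} \<union> B \<times> {1} \<in> sets P" by (intro sets.Un setsT A B)
    qed
    also have "\<dots> = measure P (A \<times> {-1}) + measure P (B \<times> {1})"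
      using AB by (intro finite_measure_Union) (auto intro: setsT)
    finally show ?thesis .
  qed
  have s2: "measure P (A \<times> {-1}) = measure PX A - measure P (A \<times> {1})"
  proof -
    have "measure PX A = measure P (fst -` A \<inter> space P)" unfolding PX_def
      by (rule measure_distr) auto
    also have "fst -` A \<inter> space P = A \<times> UNIV" using sp A_def by auto
    also have "measure P (A \<times> UNIV) = measure P ((A \<times> {-1}) \<union> (A \<times> {1}))"
    proof (rule measure_eq_AE)
      show "AE z in P. (z \<in> A \<times> UNIV) = (z \<in> A \<times> {- 1} \<union> A \<times> {1})"
        using lab by eventually_elim auto
    next
      show "A \<times> UNIV \<in> sets P" by (rule setsU[OF A])
    next
      show "A \<times> {- 1} \<union> A \<times> {1} \<in> sets P" by (intro sets.Un setsT A)
    qed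
    also have "\<dots> = measure P (A \<times> {-1}) + measure P (A \<times> {1})"
      by (intro finite_measure_Union) (auto intro: setsT)
    finally show ?thesis by simp
  qed
  have ptw: "(if f x = 1 then 1 - eta x else eta x) =
      indicator A x - indicator A x * eta x + indicator B x * eta x" if "x \<in> space SX" for x
    using fv[of x] that by (auto simp: A_def B_def)
  have iA: "integrable PX (indicator A :: _ \<Rightarrow> real)"
    by (rule integrable_real_indicator) (auto simp: PX_def A PX.emeasure_finite[unfolded PX_def] less_top[symmetric])
  have int1: "integrable PX (\<lambda>x. indicator A x - indicator A x * eta x + indicator B x * eta x)"
    using iA regI[OF A] regI[OF B] by auto
  have "integrable PX (\<lambda>x. if f x = 1 then 1 - eta x else eta x)"
  proof -
    have "integrable PX (\<lambda>x. if f x = 1 then 1 - eta x else eta x) \<longleftrightarrow>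
        integrable PX (\<lambda>x. indicator A x - indicator A x * eta x + indicator B x * eta x)"
      by (rule Bochner_Integration.integrable_cong[OF refl]) (simp add: ptw spx)
    with int1 show ?thesis by simp
  qed
  moreover have "(\<integral>x. (if f x = 1 then 1 - eta x else eta x) \<partial>PX)
      = (\<integral>x. indicator A x - indicator A x * eta x + indicator B x * eta x \<partial>PX)"
    by (rule Bochner_Integration.integral_cong[OF refl]) (simp add: ptw spx)
  moreover have "(\<integral>x. indicator A x - indicator A x * eta x + indicator B x * eta x \<partial>PX)
      = measure PX A - (\<integral>x. indicator A x * eta x \<partial>PX) + (\<integral>x. indicator B x * eta x \<partial>PX)"
    using iA regI[OF A] regI[OF B]
    by (simp add: Bochner_Integration.integral_add Bochner_Integration.integral_diff PX_def)
  ultimately show ?thesis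
    using s1 s2 regM[OF A] regM[OF B] by (simp add: PX_def)
qed

lemma bayes_classifier:
  assumes reg: "is_regression_fun P SX eta"
  shows "classifier SX (bayes_rule eta)"
proof -
  have [measurable]: "eta \<in> borel_measurable SX" using reg by (simp add: is_regression_fun_def)
  have "(\<lambda>x. sign1 (2 * eta x - 1)) \<in> borel_measurable SX"
    unfolding sign1_def by measurable
  moreover have "\<forall>x. sign1 (2 * eta x - 1) \<in> {-1, 1}" by (simp add: sign1_def)
  ultimately show ?thesis unfolding classifier_def bayes_rule_def by simp
qed

lemma excess_nonneg:
  assumes reg: "is_regression_fun P SX eta" and f: "classifier SX f"
  shows "risk P f - bayes_risk P eta \<ge> 0"
proof -
  define PX where "PX = distr P SX fst"
  define g where "g = (\<lambda>h x. if h x = (1::real) then 1 - eta x else eta x)"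
  have b: "classifier SX (bayes_rule eta)" by (rule bayes_classifier[OF reg])
  have 1: "integrable PX (g f)" "risk P f = (\<integral>x. g f x \<partial>PX)"
    using risk_formula[OF reg f] by (simp_all add: g_def PX_def)
  have 2: "integrable PX (g (bayes_rule eta))" "risk P (bayes_rule eta) = (\<integral>x. g (bayes_rule eta) x \<partial>PX)"
    using risk_formula[OF reg b] by (simp_all add: g_def PX_def)
  have fv: "f x \<in> {-1, 1}" for x using f by (auto simp: classifier_def)
  have "risk P f - bayes_risk P eta = (\<integral>x. g f x - g (bayes_rule eta) x \<partial>PX)"
    using 1 2 by (simp add: bayes_risk_def Bochner_Integration.integral_diff)
  also have "\<dots> \<ge> 0"
  proof (rule Bochner_Integration.integral_nonneg)
    fix x
    show "0 \<le> g f x - g (bayes_rule eta) x"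
      using fv[of x] by (auto simp: g_def bayes_rule_def sign1_def)
  qed
  finally show ?thesis .
qed

end

lemma powr_split1:
  fixes x t :: real assumes "0 < x" shows "x powr t = x * x powr (t - 1)"
proof -
  have "x powr t = x powr (1 + (t - 1))" by simp
  also have "\<dots> = x powr 1 * x powr (t - 1)" by (rule powr_add)
  finally show ?thesis using assms by simp
qed

lemma powr_subadd:
  fixes x y t :: real
  assumes x: "0 \<le> x" and y: "0 \<le> y" and t: "0 < t" "t \<le> 1"
  shows "(x + y) powr t \<le> x powr t + y powr t"
proof (cases "x + y = 0")
  case True
  hence "x = 0" "y = 0" using x y by auto
  thus ?thesis by simp
next
  case False
  define s where "s = x + y"
  have s: "s > 0" using False x y by (simp add: s_def)
  have h: "z * s powr (t - 1) \<le> z powr t" if z: "0 \<le> z" "z \<le> s" for z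
  proof (cases "z = 0")
    case True thus ?thesis by simp
  next
    case False
    hence zp: "z > 0" using z by simp
    have "s powr (t - 1) \<le> z powr (t - 1)" by (rule powr_mono2') (use t zp z in auto)
    hence "z * s powr (t - 1) \<le> z * z powr (t - 1)" using zp by (simp add: mult_left_mono)
    also have "\<dots> = z powr t" using powr_split1[OF zp, of t] by simp
    finally show ?thesis .
  qed
  have "(x + y) powr t = x * s powr (t - 1) + y * s powr (t - 1)"
    using powr_split1[OF s, of t] by (simp add: s_def distrib_right)
  also have "\<dots> \<le> x powr t + y powr t"
    using h[of x] h[of y] x y by (intro add_mono) (auto simp: s_def)
  finally show ?thesis .
qed

lemma perf_real:
  fixes D eps s cc t m eb Pr :: real and n M :: nat
  assumes eps: "0 < eps" "eps < D" and Pr: "Pr \<le> exp (- (real n * D^2 / (2 * s)))"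
    and Ds: "D \<le> s" and sV: "2 * s \<le> cc * ((D + eb) powr t + m)"
    and eb: "0 \<le> eb" and m: "0 \<le> m" and t: "0 < t" "t \<le> 1" and cc: "0 < cc"
    and H: "real n * eps^2 \<ge> 2 * ln (real M) * (cc * ((eps + eb) powr t + m))" and M: "M \<ge> 2"
  shows "D * Pr \<le> eps / M"
proof -
  define u where "u = D / eps"
  have u: "u > 1" using eps by (simp add: u_def)
  have Du: "D = u * eps" using eps by (simp add: u_def)
  define V where "V = cc * ((eps + eb) powr t + m)"
  have V: "V > 0" using eps eb m cc by (simp add: V_def add_pos_nonneg)
  have VD: "cc * ((D + eb) powr t + m) \<le> u * V"
  proof -
    have "eb \<le> u * eb" using mult_right_mono[of 1 u eb] u eb by simp
    hence "D + eb \<le> u * (eps + eb)" using Du by (simp add: distrib_left)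
    hence "(D + eb) powr t \<le> (u * (eps + eb)) powr t"
      by (intro powr_mono2) (use t eps eb in auto)
    also have "\<dots> = u powr t * (eps + eb) powr t" using u eps eb by (simp add: powr_mult)
    also have "\<dots> \<le> u * (eps + eb) powr t"
    proof (rule mult_right_mono)
      have "u powr t \<le> u powr 1" by (rule powr_mono) (use u t in auto)
      thus "u powr t \<le> u" using u by simp
    qed simp
    finally have "(D + eb) powr t \<le> u * (eps + eb) powr t" .
    moreover have "m \<le> u * m" using mult_right_mono[of 1 u m] u m by simp
    ultimately have "(D + eb) powr t + m \<le> u * ((eps + eb) powr t + m)" by (simp add: distrib_left)
    hence "cc * ((D + eb) powr t + m) \<le> cc * (u * ((eps + eb) powr t + m))"
      using cc by (intro mult_left_mono) auto
    thus ?thesis by (simp add: V_def mult.left_commute)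
  qed
  define HH where "HH = real n * eps^2 / V"
  have HH: "HH \<ge> 2 * ln (real M)" using H V by (simp add: HH_def V_def le_divide_eq)
  have ln2: "ln (2::real) \<ge> 2/3" by (rule ln2_ge_two_thirds)
  have lnM: "ln (real M) \<ge> ln 2" using M by simp
  have HH1: "HH \<ge> 1" using HH ln2 lnM by linarith
  have spos: "s > 0" using Ds eps by simp
  have "u * HH \<le> real n * D^2 / (2 * s)"
  proof -
    have "real n * D^2 / (u * V) = (u * (real n * eps^2 * u)) / (u * V)"
      by (simp add: Du power_mult_distrib mult_ac power2_eq_square)
    also have "\<dots> = (real n * eps^2 * u) / V" using u by (simp only: mult_divide_mult_cancel_left_if) simp
    also have "\<dots> = u * HH" by (simp add: HH_def)
    finally have "u * HH = real n * D^2 / (u * V)" by simp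
    also have "\<dots> \<le> real n * D^2 / (2 * s)"
      by (rule divide_left_mono) (use sV VD spos u V in auto)
    finally show ?thesis .
  qed
  hence "exp (- (real n * D^2 / (2 * s))) \<le> exp (- (u * HH))" by simp
  hence Pr2: "Pr \<le> exp (- (u * HH))" using Pr by linarith
  have "D * Pr \<le> D * exp (- (u * HH))" using Pr2 eps by (simp add: mult_left_mono)
  also have "\<dots> = eps * (u * exp (- (u * HH)))" by (simp add: Du)
  also have "u * exp (- (u * HH)) \<le> exp (- HH)"
  proof -
    have "u \<le> exp (u - 1)" using exp_ge_add_one_self[of "u - 1"] by simp
    hence "u * exp (- (u * HH)) \<le> exp (u - 1) * exp (- (u * HH))" by (simp add: mult_right_mono)
    also have "\<dots> = exp (- 1 - u * (HH - 1))" by (simp add: exp_add[symmetric] algebra_simps)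
    also have "\<dots> \<le> exp (- 1 - (HH - 1))"
    proof -
      have "HH - 1 \<le> u * (HH - 1)" using mult_right_mono[of 1 u "HH - 1"] u HH1 by simp
      thus ?thesis by simp
    qed
    also have "\<dots> = exp (- HH)" by simp
    finally show ?thesis .
  qed
  also have "exp (- HH) \<le> 1 / real M"
  proof -
    have "exp (- HH) \<le> exp (- (2 * ln (real M)))" using HH by simp
    also have "\<dots> = 1 / (real M)^2"
    proof -
      have "exp (2 * ln (real M)) = exp (ln (real M) + ln (real M))" by (simp only: mult_2)
      also have "\<dots> = exp (ln (real M)) * exp (ln (real M))" by (rule exp_add)
      also have "\<dots> = (real M)^2" using M by (simp add: power2_eq_square)
      finally have "exp (2 * ln (real M)) = (real M)^2" .
      thus ?thesis by (simp add: exp_minus inverse_eq_divide)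
    qed
    also have "\<dots> \<le> 1 / real M" using M by (simp add: power2_eq_square divide_simps)
    finally show ?thesis .
  qed
  finally show ?thesis using eps by (simp add: mult_left_mono)
qed

lemma eps_choice:
  fixes ell c0 eb t :: real
  assumes ell: "0 < ell" and c0: "0 < c0" and eb: "0 \<le> eb" and t: "0 < t" "t \<le> 1"
  defines "eps \<equiv> (4 * c0 * ell) powr (1 / (2 - t)) + sqrt (8 * c0 * ell * (eb powr t))"
  shows "eps^2 \<ge> 2 * c0 * ell * ((eps + eb) powr t + eb powr t)"
proof -
  define m where "m = eb powr t"
  define a where "a = (4 * c0 * ell) powr (1 / (2 - t))"
  define b where "b = sqrt (8 * c0 * ell * m)"
  have m: "m \<ge> 0" by (simp add: m_def)
  have a: "a > 0" using c0 ell by (simp add: a_def)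
  have b: "b \<ge> 0" using c0 ell m by (simp add: b_def)
  have e: "eps = a + b" by (simp add: eps_def a_def b_def m_def)
  have ea: "a \<le> eps" "0 < eps" using e a b by auto
  have "a powr (2 - t) = (4 * c0 * ell) powr (1 / (2 - t) * (2 - t))"
    by (simp add: a_def powr_powr)
  also have "\<dots> = 4 * c0 * ell" using t c0 ell by simp
  finally have apow: "a powr (2 - t) = 4 * c0 * ell" .
  have "4 * c0 * ell \<le> eps powr (2 - t)"
    unfolding apow[symmetric] by (rule powr_mono2) (use t a ea in auto)
  hence "4 * c0 * ell * eps powr t \<le> eps powr (2 - t) * eps powr t"
    by (simp add: mult_right_mono)
  also have "\<dots> = eps powr 2" by (simp add: powr_add[symmetric])
  also have "\<dots> = eps^2" using ea by (simp add: powr_realpow)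
  finally have h1: "4 * c0 * ell * eps powr t \<le> eps^2" .
  have "b^2 = 8 * c0 * ell * m" using c0 ell m by (simp add: b_def)
  moreover have "b^2 \<le> eps^2" using e a b by (simp add: power_mono)
  ultimately have h2: "8 * c0 * ell * m \<le> eps^2" by simp
  have sub: "(eps + eb) powr t \<le> eps powr t + m"
    unfolding m_def by (rule powr_subadd) (use ea eb t in auto)
  have "2 * c0 * ell * ((eps + eb) powr t + m) \<le> 2 * c0 * ell * (eps powr t + 2 * m)"
    using sub c0 ell by (intro mult_left_mono) auto
  also have "\<dots> = (4 * c0 * ell * eps powr t + 8 * c0 * ell * m) / 2" by (simp add: algebra_simps)
  also have "\<dots> \<le> eps^2" using h1 h2 by simp
  finally show ?thesis by (simp add: m_def)
qed

lemma powr_le_max1: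
  fixes x p :: real assumes "0 \<le> x" "0 \<le> p" "p \<le> 1"
  shows "x powr p \<le> max 1 x"
proof (cases "x \<le> 1")
  case True
  hence "x powr p \<le> 1" using assms by (simp add: powr_le1)
  thus ?thesis by simp
next
  case False
  hence "x powr p \<le> x powr 1" using assms by (intro powr_mono) auto
  thus ?thesis using False by simp
qed

lemma final_const:
  fixes ell c0 m p K :: real
  assumes ell: "0 < ell" and c0: "0 < c0" and m: "0 \<le> m" and p: "0 < p" "p \<le> 1"
    and K: "K = 32 * max 6 (max (537 * c0) (16 * (2 * c0 + 1 / 3)))"
  shows "2 * ((4 * c0 * ell) powr p + sqrt (8 * c0 * ell * m)) \<le> K * (sqrt (m * ell) + ell powr p)"
proof -
  have K1: "192 \<le> K" "32 * 537 * c0 \<le> K" using K by auto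
  have "2 * (4 * c0 * ell) powr p = 2 * (4 * c0) powr p * ell powr p"
    using c0 ell by (simp add: powr_mult)
  also have "\<dots> \<le> K * ell powr p"
  proof (rule mult_right_mono)
    have "(4 * c0) powr p \<le> max 1 (4 * c0)" by (rule powr_le_max1) (use c0 p in auto)
    thus "2 * (4 * c0) powr p \<le> K" using K1 c0 by linarith
  qed simp
  finally have A: "2 * (4 * c0 * ell) powr p \<le> K * ell powr p" .
  have "2 * sqrt (8 * c0 * ell * m) = sqrt (32 * c0) * sqrt (m * ell)"
  proof -
    have s4: "sqrt 4 = (2::real)" by (simp add: real_sqrt_unique)
    have "2 * sqrt (8 * c0 * ell * m) = sqrt 4 * sqrt (8 * c0 * ell * m)" by (simp add: s4)
    also have "\<dots> = sqrt (4 * (8 * c0 * ell * m))" by (rule real_sqrt_mult[symmetric])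
    also have "4 * (8 * c0 * ell * m) = (32 * c0) * (m * ell)" by simp
    also have "sqrt \<dots> = sqrt (32 * c0) * sqrt (m * ell)" by (rule real_sqrt_mult)
    finally show ?thesis .
  qed
  also have "\<dots> \<le> K * sqrt (m * ell)"
  proof (rule mult_right_mono)
    have "sqrt (32 * c0) \<le> max 1 (32 * c0)"
    proof (cases "32 * c0 \<le> 1")
      case True thus ?thesis using c0 by (simp add: real_sqrt_le_1_iff)
    next
      case False
      hence s1: "1 \<le> sqrt (32 * c0)" by simp
      have "1 * sqrt (32 * c0) \<le> sqrt (32 * c0) * sqrt (32 * c0)" by (rule mult_right_mono[OF s1]) (use c0 in simp)
      also have "\<dots> = 32 * c0" using c0 by simp
      finally have "sqrt (32 * c0) \<le> 32 * c0" by simp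
      thus ?thesis by simp
    qed
    thus "sqrt (32 * c0) \<le> K" using K1 c0 by linarith
  qed (use m ell in simp)
  finally have B: "2 * sqrt (8 * c0 * ell * m) \<le> K * sqrt (m * ell)" .
  show ?thesis using A B by (simp add: distrib_left)
qed

context
  fixes P :: "('a \<times> real) measure" and SX :: "'a measure"
  assumes PS: "prob_space P"
    and sets_P: "sets P = sets (SX \<Otimes>\<^sub>M borel)"
    and lab: "AE z in P. snd z \<in> {-1, 1}"
begin

lemma tail_bound:
  assumes f: "classifier SX f" and g: "classifier SX g" and rfg: "risk P g \<le> risk P f"
    and A: "A \<in> sets (PiM {..<n} (\<lambda>_. P))"
    and Aneg: "\<forall>D\<in>A. (\<Sum>i<n. max (1 - snd (D i) * f (fst (D i))) 0 - max (1 - snd (D i) * g (fst (D i))) 0) \<le> 0"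
  shows "\<exists>s. measure (PiM {..<n} (\<lambda>_. P)) A \<le> exp (- (real n * (risk P f - risk P g)^2 / (2 * s)))
     \<and> risk P f - risk P g \<le> s \<and> s \<le> measure P {z\<in>space P. f (fst z) \<noteq> g (fst z)}"
proof -
  interpret prob_space P by (rule PS)
  interpret Q: prob_space "PiM {..<n} (\<lambda>_. P)" by (rule prob_space_PiM) (rule PS)
  note [measurable] = meas_fst[OF PS sets_P lab] meas_snd[OF PS sets_P lab]
  have [measurable]: "f \<in> borel_measurable SX" "g \<in> borel_measurable SX"
    using f g by (auto simp: classifier_def)
  define Z where "Z = (\<lambda>z. max (1 - snd z * f (fst z)) 0 - max (1 - snd z * g (fst z)) (0::real))"
  have Zm: "Z \<in> borel_measurable P" unfolding Z_def by measurable
  define Sp where "Sp = {z\<in>space P. snd z \<noteq> f (fst z) \<and> snd z = g (fst z)}"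
  define Sm where "Sm = {z\<in>space P. snd z = f (fst z) \<and> snd z \<noteq> g (fst z)}"
  define pp where "pp = measure P Sp"
  define pm where "pm = measure P Sm"
  have rd: "risk P f - risk P g = pp - pm"
    and dis: "pp + pm \<le> measure P {z\<in>space P. f (fst z) \<noteq> g (fst z)}"
    using risk_diff[OF PS sets_P lab f g] by (simp_all add: pp_def pm_def Sp_def Sm_def)
  have pm0: "0 \<le> pm" by (simp add: pm_def)
  have pmp: "pm \<le> pp" using rd rfg by simp
  have le1: "pp + pm \<le> 1" using dis by (meson order_trans prob_le_1)
  obtain l where l: "l \<ge> 0" and lb: "1 - (pp + pm) + exp (- l) * pp + exp l * pm
      \<le> exp (- ((pp - pm)^2 / (2 * (pp + pm))))"
    using mgf_real_bound[OF pm0 pmp] by blast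
  define x where "x = 1 - (pp + pm) + exp (- l) * pp + exp l * pm"
  have x0: "0 \<le> x" using le1 pm0 pmp by (simp add: x_def add_nonneg_nonneg)
  have AnegZ: "\<forall>D\<in>A. (\<Sum>i<n. Z (D i)) \<le> 0" using Aneg by (simp add: Z_def)
  have "emeasure (PiM {..<n} (\<lambda>_. P)) A \<le> (\<integral>\<^sup>+z. ennreal (exp (- (l/2) * Z z)) \<partial>P) ^ n"
    by (rule chernoff_prod[OF PS sets_P lab Zm A AnegZ]) (use l in simp)
  also have "(\<integral>\<^sup>+z. ennreal (exp (- (l/2) * Z z)) \<partial>P) = ennreal x"
    using mgf_eq[OF PS sets_P lab f g, of l] by (simp add: Z_def x_def pp_def pm_def Sp_def Sm_def)
  also have "ennreal x ^ n = ennreal (x ^ n)" by (simp add: ennreal_power x0)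
  finally have "ennreal (measure (PiM {..<n} (\<lambda>_. P)) A) \<le> ennreal (x ^ n)"
    by (simp add: Q.emeasure_eq_measure)
  hence mA: "measure (PiM {..<n} (\<lambda>_. P)) A \<le> x ^ n"
    using x0 by (simp add: ennreal_le_iff)
  have "x ^ n \<le> (exp (- ((pp - pm)^2 / (2 * (pp + pm))))) ^ n"
    using x0 lb by (simp add: x_def power_mono)
  also have "\<dots> = exp (real n * (- ((pp - pm)^2 / (2 * (pp + pm)))))"
    by (rule exp_of_nat_mult[symmetric])
  also have "real n * (- ((pp - pm)^2 / (2 * (pp + pm)))) = - (real n * (risk P f - risk P g)^2 / (2 * (pp + pm)))"
    by (simp add: rd)
  finally show ?thesis
    using mA rd pm0 dis by (intro exI[of _ "pp + pm"]) auto
qed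

end

theorem theorem3:
  fixes P :: "('a \<times> real) measure" and SX :: "'a measure"
    and eta :: "'a \<Rightarrow> real" and kappa c0 :: real
    and F :: "('a \<Rightarrow> real) set" and M n :: nat
    and erm :: "(nat \<Rightarrow> 'a \<times> real) \<Rightarrow> ('a \<Rightarrow> real)"
  assumes "prob_space P"
    and "sets P = sets (SX \<Otimes>\<^sub>M borel)"
    and "AE z in P. snd z \<in> {-1, 1}"
    and "is_regression_fun P SX eta"
    and "kappa \<ge> 1" and "c0 > 0"
    and "margin_assumption P SX eta kappa c0"
    and "finite F" and "F \<noteq> {}" and "card F = M"
    and "\<forall>f \<in> F. classifier SX f"
    and "n \<ge> 1"
    and "is_ERM n P F erm"
    and "\<forall>f \<in> F. {D \<in> space (PiM {..<n} (\<lambda>_. P)). erm D = f} \<in> sets (PiM {..<n} (\<lambda>_. P))"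
  shows "(\<integral>D. risk P (erm D) - bayes_risk P eta \<partial>(PiM {..<n} (\<lambda>_. P)))
    \<le> Min ((\<lambda>f. risk P f - bayes_risk P eta) ` F)
       + 32 * max 6 (max (537 * c0) (16 * (2 * c0 + 1 / 3)))
         * (sqrt (Min ((\<lambda>f. (risk P f - bayes_risk P eta) powr (1 / kappa)) ` F) * ln (real M) / real n)
            + (ln (real M) / real n) powr (kappa / (2 * kappa - 1)))"
proof -
  note PS = assms(1) and sets_P = assms(2) and lab = assms(3) and reg = assms(4)
    and kap = assms(5) and c0 = assms(6) and MA = assms(7) and finF = assms(8) and neF = assms(9)
    and cardF = assms(10) and clF = assms(11) and n1 = assms(12) and ERM = assms(13) and measE = assms(14)
  interpret prob_space P by (rule PS)
  define Q where "Q = PiM {..<n} (\<lambda>_. P)"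
  interpret Q: prob_space Q unfolding Q_def by (rule prob_space_PiM) (rule PS)
  define e where "e = (\<lambda>f. risk P f - bayes_risk P eta)"
  define K where "K = 32 * max 6 (max (537 * c0) (16 * (2 * c0 + 1 / 3)))"
  define t where "t = 1 / kappa"
  define p where "p = kappa / (2 * kappa - 1)"
  define ell where "ell = ln (real M) / real n"
  have t: "0 < t" "t \<le> 1" using kap by (auto simp: t_def)
  have p: "p = 1 / (2 - t)" using kap by (simp add: p_def t_def field_simps)
  have p01: "0 < p" "p \<le> 1" using kap by (auto simp: p_def field_simps)
  have K0: "0 \<le> K" by (simp add: K_def)
  have M1: "M \<ge> 1" using cardF finF neF by (metis card_0_eq less_one not_le)
  have ell0: "0 \<le> ell" using M1 by (simp add: ell_def)
  have e0: "0 \<le> e f" if "f \<in> F" for f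
    using excess_nonneg[OF PS sets_P lab reg] clF that by (simp add: e_def)
  have "Min (e ` F) \<in> e ` F" by (rule Min_in) (use finF neF in auto)
  then obtain fb where fb: "fb \<in> F" "e fb = Min (e ` F)" by (metis imageE)
  have fbmin: "e fb \<le> e f" if "f \<in> F" for f using fb finF that by simp
  define eb where "eb = e fb"
  define m where "m = eb powr t"
  have eb0: "0 \<le> eb" using e0[OF fb(1)] by (simp add: eb_def)
  have m0: "0 \<le> m" by (simp add: m_def)
  have Min1: "Min ((\<lambda>f. risk P f - bayes_risk P eta) ` F) = eb"
    using fb by (simp add: e_def eb_def)
  have Min2: "Min ((\<lambda>f. (risk P f - bayes_risk P eta) powr (1 / kappa)) ` F) = m"
  proof (rule Min_eqI)
    show "finite ((\<lambda>f. (risk P f - bayes_risk P eta) powr (1 / kappa)) ` F)" using finF by simp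
    show "m \<in> (\<lambda>f. (risk P f - bayes_risk P eta) powr (1 / kappa)) ` F"
      by (rule image_eqI[where x = fb]) (simp_all add: m_def eb_def e_def t_def fb(1))
    fix y assume "y \<in> (\<lambda>f. (risk P f - bayes_risk P eta) powr (1 / kappa)) ` F"
    then obtain f where f: "f \<in> F" "y = e f powr t" by (auto simp: e_def t_def)
    show "m \<le> y" unfolding f m_def eb_def
      by (rule powr_mono2) (use t e0[OF fb(1)] fbmin[OF f(1)] in auto)
  qed
  define Ef where "Ef = (\<lambda>f. {D \<in> space Q. erm D = f})"
  have Ef: "Ef f \<in> sets Q" if "f \<in> F" for f using measE that by (simp add: Ef_def Q_def)
  have intI: "integrable Q (indicator (Ef f) :: _ \<Rightarrow> real)" if "f \<in> F" for f
    by (rule integrable_real_indicator) (use Ef[OF that] in \<open>auto simp: less_top[symmetric]\<close>)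
  have ermF: "erm D \<in> F" if "D \<in> space Q" for D using ERM that by (simp add: is_ERM_def Q_def)
  have int_eq: "(\<integral>D. e (erm D) \<partial>Q) = (\<Sum>f\<in>F. e f * measure Q (Ef f))"
  proof -
    have "(\<integral>D. e (erm D) \<partial>Q) = (\<integral>D. (\<Sum>f\<in>F. e f * indicator (Ef f) D) \<partial>Q)"
    proof (rule Bochner_Integration.integral_cong[OF refl])
      fix D assume D: "D \<in> space Q"
      have "(\<Sum>f\<in>F. e f * indicator (Ef f) D) = (\<Sum>f\<in>F. if erm D = f then e f else 0)"
        by (rule sum.cong) (auto simp: Ef_def D indicator_def)
      also have "\<dots> = e (erm D)" using finF ermF[OF D] by simp
      finally show "e (erm D) = (\<Sum>f\<in>F. e f * indicator (Ef f) D)" by simp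
    qed
    also have "\<dots> = (\<Sum>f\<in>F. (\<integral>D. e f * indicator (Ef f) D \<partial>Q))"
      by (rule Bochner_Integration.integral_sum) (use intI in auto)
    also have "\<dots> = (\<Sum>f\<in>F. e f * measure Q (Ef f))"
      by (rule sum.cong) (use Ef intI in auto)
    finally show ?thesis .
  qed
  have sum1: "(\<Sum>f\<in>F. measure Q (Ef f)) = 1"
  proof -
    have "(\<Sum>f\<in>F. measure Q (Ef f)) = measure Q (\<Union>f\<in>F. Ef f)"
      by (rule Q.finite_measure_finite_Union[symmetric]) (use finF Ef in \<open>auto simp: disjoint_family_on_def Ef_def\<close>)
    also have "(\<Union>f\<in>F. Ef f) = space Q" using ermF by (auto simp: Ef_def)
    finally show ?thesis by (simp add: Q.prob_space)
  qed
  define eps where "eps = (4 * c0 * ell) powr (1 / (2 - t)) + sqrt (8 * c0 * ell * (eb powr t))"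
  have eps0: "0 \<le> eps" unfolding eps_def using c0 ell0 by (intro add_nonneg_nonneg) auto
  have perf: "(e f - eb) * measure Q (Ef f) \<le> eps * measure Q (Ef f) + eps / real M"
    if f: "f \<in> F" for f
  proof (cases "e f - eb \<le> eps")
    case True
    hence "(e f - eb) * measure Q (Ef f) \<le> eps * measure Q (Ef f)" by (simp add: mult_right_mono)
    moreover have "0 \<le> eps / real M" using eps0 by simp
    ultimately show ?thesis by linarith
  next
    case False
    hence gt: "eps < e f - eb" by simp
    have "f \<noteq> fb" using gt eps0 by (auto simp: eb_def)
    hence "card {f, fb} = 2" by simp
    moreover have "card {f, fb} \<le> M" using cardF finF f fb by (metis card_mono empty_subsetI insert_subset)
    ultimately have M2: "M \<ge> 2" by simp
    have ellp: "0 < ell" using M2 n1 by (simp add: ell_def)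
    have epsp: "0 < eps" using ellp c0 by (simp add: eps_def add_pos_nonneg)
    have clf: "classifier SX f" and clfb: "classifier SX fb" using clF f fb by auto
    have clb: "classifier SX (bayes_rule eta)" by (rule bayes_classifier[OF PS sets_P lab reg])
    have rfg: "risk P fb \<le> risk P f" using fbmin[OF f] by (simp add: e_def)
    have Aneg: "\<forall>D\<in>Ef f. (\<Sum>i<n. max (1 - snd (D i) * f (fst (D i))) 0 - max (1 - snd (D i) * fb (fst (D i))) 0) \<le> 0"
    proof
      fix D assume D: "D \<in> Ef f"
      hence "D \<in> space Q" "erm D = f" by (auto simp: Ef_def)
      hence "emp_hinge n D f \<le> emp_hinge n D fb" using ERM fb by (auto simp: is_ERM_def Q_def)
      hence "(\<Sum>i<n. max (1 - snd (D i) * f (fst (D i))) 0) \<le> (\<Sum>i<n. max (1 - snd (D i) * fb (fst (D i))) 0)"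
        using n1 by (simp add: emp_hinge_def divide_le_cancel)
      thus "(\<Sum>i<n. max (1 - snd (D i) * f (fst (D i))) 0 - max (1 - snd (D i) * fb (fst (D i))) 0) \<le> 0"
        by (simp add: sum_subtractf)
    qed
    obtain s where s1: "measure Q (Ef f) \<le> exp (- (real n * (risk P f - risk P fb)^2 / (2 * s)))"
      and s2: "risk P f - risk P fb \<le> s" and s3: "s \<le> measure P {z\<in>space P. f (fst z) \<noteq> fb (fst z)}"
      using tail_bound[OF PS sets_P lab clf clfb rfg Ef[OF f, unfolded Q_def] Aneg] by (auto simp: Q_def)
    have Def: "risk P f - risk P fb = e f - eb" by (simp add: e_def eb_def)
    have marg: "measure P {z\<in>space P. h (fst z) \<noteq> bayes_rule eta (fst z)} \<le> c0 * e h powr t / 2"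
      if h: "classifier SX h" for h
    proof -
      have "measure P {z\<in>space P. h (fst z) \<noteq> bayes_rule eta (fst z)}
          = (\<integral>z. \<bar>h (fst z) - bayes_rule eta (fst z)\<bar> \<partial>P) / 2"
        by (rule dis_int[OF PS sets_P lab h clb])
      also have "\<dots> \<le> c0 * e h powr t / 2"
        using MA h by (simp add: margin_assumption_def e_def t_def divide_right_mono)
      finally show ?thesis .
    qed
    have sV: "2 * s \<le> c0 * ((e f - eb + eb) powr t + m)"
    proof -
      have "s \<le> c0 * e f powr t / 2 + c0 * eb powr t / 2"
        using s3 dis_tri[OF PS sets_P lab clf clfb clb] marg[OF clf] marg[OF clfb]
        by (simp add: eb_def)
      thus ?thesis by (simp add: m_def algebra_simps)
    qed
    have Hc: "real n * eps^2 \<ge> 2 * ln (real M) * (c0 * ((eps + eb) powr t + m))"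
    proof -
      have "eps^2 \<ge> 2 * c0 * ell * ((eps + eb) powr t + eb powr t)"
        unfolding eps_def by (rule eps_choice) (use ellp c0 eb0 t in auto)
      hence "real n * eps^2 \<ge> real n * (2 * c0 * ell * ((eps + eb) powr t + eb powr t))"
        by (simp add: mult_left_mono)
      also have "real n * (2 * c0 * ell * ((eps + eb) powr t + eb powr t))
          = 2 * ln (real M) * (c0 * ((eps + eb) powr t + m))"
        using n1 by (simp add: ell_def m_def)
      finally show ?thesis by simp
    qed
    have "(e f - eb) * measure Q (Ef f) \<le> eps / real M"
      by (rule perf_real[where s = s and cc = c0 and t = t and m = m and eb = eb and n = n])
         (use epsp gt s1 s2 sV eb0 m0 t c0 Hc M2 Def in auto)
    moreover have "0 \<le> eps * measure Q (Ef f)" using eps0 by simp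
    ultimately show ?thesis by linarith
  qed
  have "(\<integral>D. e (erm D) \<partial>Q) - eb = (\<Sum>f\<in>F. (e f - eb) * measure Q (Ef f))"
    using int_eq sum1 by (simp add: left_diff_distrib sum_subtractf sum_distrib_left[symmetric])
  also have "\<dots> \<le> (\<Sum>f\<in>F. eps * measure Q (Ef f) + eps / real M)"
    by (rule sum_mono) (rule perf)
  also have "\<dots> = 2 * eps"
    using sum1 cardF M1 by (simp add: sum.distrib sum_distrib_left[symmetric])
  also have "\<dots> \<le> K * (sqrt (m * ell) + ell powr p)"
  proof (cases "ell = 0")
    case True
    thus ?thesis by (simp add: eps_def)
  next
    case False
    hence "0 < ell" using ell0 by simp
    thus ?thesis unfolding eps_def p[symmetric] m_def
      by (intro final_const) (use c0 p01 K_def in auto)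
  qed
  finally have main: "(\<integral>D. e (erm D) \<partial>Q) \<le> eb + K * (sqrt (m * ell) + ell powr p)" by simp
  show ?thesis
    using main unfolding Min1 Min2 by (simp add: e_def Q_def K_def ell_def p_def)
qed

end
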